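(* With the construction below, for every $n\ge n_0$ and every $y\in M$ with $0<d(\bar x,y)<\dfrac{\rho_n}{n(n+1)}$, we have $\overline d(x_n,y)>\rho_n$.
   Context: Let $(M,d)$ be a metric space, $\bar x\in M$, and $(x_n)_{n\ge1}$ a sequence of distinct points of $M\setminus\{\bar x\}$ with $d(x_n,\bar x)\to0$. Set $\rho_n=\frac{n}{n+1}d(x_n,\bar x)$ and assume $(\rho_n)_{n\ge1}$ is strictly decreasing. Fix $0<c<1$ and an integer $n_0\ge1$ with $c(n_0+1)<n_0$. Define $\theta(x,y)=\rho_n$ if $\{x,y\}=\{x_n,\bar x\}$ for some $n\ge n_0$, and $\theta(x,y)=d(x,y)$ otherwise. Define $\overline d(x,y)=\inf\sum_{i=0}^{N-1}\theta(a_i,a_{i+1})$, the infimum over all $N\ge1$ and all chains $a_0=x,a_1,\dots,a_N=y$ in $M$. *)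

theory Defs
  imports "HOL-Analysis.Analysis"
begin

definition rho :: "(nat \<Rightarrow> 'a::metric_space) \<Rightarrow> 'a \<Rightarrow> nat \<Rightarrow> real" where
  "rho x xbar n = real n / (real n + 1) * dist (x n) xbar"

definition theta :: "(nat \<Rightarrow> 'a::metric_space) \<Rightarrow> 'a \<Rightarrow> nat \<Rightarrow> 'a \<Rightarrow> 'a \<Rightarrow> real" where
  "theta x xbar n0 p q =
     (if \<exists>n\<ge>n0. {p, q} = {x n, xbar}
      then rho x xbar (SOME n. n \<ge> n0 \<and> {p, q} = {x n, xbar})
      else dist p q)"

definition dbar :: "(nat \<Rightarrow> 'a::metric_space) \<Rightarrow> 'a \<Rightarrow> nat \<Rightarrow> 'a \<Rightarrow> 'a \<Rightarrow> real" where
  "dbar x xbar n0 p q =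
     Inf {(\<Sum>i<N. theta x xbar n0 (a i) (a (Suc i))) | N a.
            N \<ge> 1 \<and> a 0 = p \<and> a N = q}"

end

theory Submission
  imports Defs
begin

lemma theta_cases:
  "theta x xbar n0 p q = dist p q \<or>
   (\<exists>m\<ge>n0. {p,q} = {x m, xbar} \<and> theta x xbar n0 p q = rho x xbar m)"
proof (cases "\<exists>n\<ge>n0. {p, q} = {x n, xbar}")
  case True
  let ?m = "SOME n. n \<ge> n0 \<and> {p, q} = {x n, xbar}"
  have "?m \<ge> n0 \<and> {p, q} = {x ?m, xbar}" using someI_ex[OF True] by simp
  moreover have "theta x xbar n0 p q = rho x xbar ?m" using True by (simp add: theta_def)
  ultimately show ?thesis by blast
next
  case False
  then have "theta x xbar n0 p q = dist p q" unfolding theta_def by (rule if_not_P)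
  then show ?thesis by blast
qed

lemma theta_eq:
  assumes inj: "inj_on x {1..}" and ne: "\<And>n. n \<ge> 1 \<Longrightarrow> x n \<noteq> xbar"
    and n0: "n0 \<ge> 1" and m: "n0 \<le> m" and pq: "{p,q} = {x m, xbar}"
  shows "theta x xbar n0 p q = rho x xbar m"
proof -
  have ex: "\<exists>n\<ge>n0. {p, q} = {x n, xbar}" using m pq by blast
  let ?m = "SOME n. n \<ge> n0 \<and> {p, q} = {x n, xbar}"
  have m': "?m \<ge> n0" "{x ?m, xbar} = {x m, xbar}" using someI_ex[OF ex] pq by auto
  have th: "theta x xbar n0 p q = rho x xbar ?m" using ex by (simp add: theta_def)
  have "x ?m = x m" using m'(2) ne[of ?m] m' n0 by (auto simp: doubleton_eq_iff)
  then have "?m = m" using inj m m' n0 by (auto simp: inj_on_def)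
  then show ?thesis using th by simp
qed

lemma theta_half:
  assumes n0: "n0 \<ge> 1"
  shows "dist p q / 2 \<le> theta x xbar n0 p q"
proof -
  from theta_cases[of x xbar n0 p q] show ?thesis
  proof
    assume "theta x xbar n0 p q = dist p q" then show ?thesis by simp
  next
    assume "\<exists>m\<ge>n0. {p,q} = {x m, xbar} \<and> theta x xbar n0 p q = rho x xbar m"
    then obtain m where m: "m \<ge> n0" "{p,q} = {x m, xbar}" "theta x xbar n0 p q = rho x xbar m"
      by auto
    have D: "dist p q = dist (x m) xbar" using m(2)
      by (auto simp: doubleton_eq_iff dist_commute)
    have "real m \<ge> 1" using m n0 by simp
    then have "1/2 \<le> real m / (real m + 1)" by (simp add: field_simps)
    then have "1/2 * dist (x m) xbar \<le> real m / (real m + 1) * dist (x m) xbar"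
      by (intro mult_right_mono) auto
    then show ?thesis using m(3) D by (simp add: rho_def)
  qed
qed

lemma chain_half:
  assumes n0: "n0 \<ge> 1" and kl: "k \<le> l"
  shows "dist (a k) (a l) / 2 \<le> (\<Sum>i\<in>{k..<l}. theta x xbar n0 (a i) (a (Suc i)))"
  using kl
proof (induction l rule: dec_induct)
  case base then show ?case by simp
next
  case (step l)
  have "dist (a k) (a (Suc l)) \<le> dist (a k) (a l) + dist (a l) (a (Suc l))"
    by (rule dist_triangle)
  moreover have "dist (a l) (a (Suc l)) / 2 \<le> theta x xbar n0 (a l) (a (Suc l))"
    using theta_half[OF n0] .
  ultimately show ?case using step by simp
qed

lemma rho_mono:
  assumes decr: "\<And>n. n \<ge> 1 \<Longrightarrow> rho x xbar (Suc n) < rho x xbar n"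
    and "1 \<le> m" "m \<le> n"
  shows "rho x xbar n \<le> rho x xbar m"
  using assms(3)
proof (induction n rule: dec_induct)
  case base then show ?case by simp
next
  case (step k)
  then show ?case using decr[of k] assms(2) by simp
qed

theorem lemma7p3:
  fixes x :: "nat \<Rightarrow> 'a::metric_space" and xbar :: 'a and c :: real and n0 :: nat
  assumes distinct: "inj_on x {1..}"
    and ne: "\<And>n. n \<ge> 1 \<Longrightarrow> x n \<noteq> xbar"
    and lim: "(\<lambda>n. dist (x n) xbar) \<longlonglongrightarrow> 0"
    and decr: "\<And>n. n \<ge> 1 \<Longrightarrow> rho x xbar (Suc n) < rho x xbar n"
    and c: "0 < c" "c < 1"
    and n0: "n0 \<ge> 1" "c * (real n0 + 1) < real n0"
  shows "\<forall>n \<ge> n0. \<forall>y. 0 < dist xbar y \<and> dist xbar y < rho x xbar n / (real n * (real n + 1))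
            \<longrightarrow> dbar x xbar n0 (x n) y > rho x xbar n"
proof (intro allI impI)
  fix n y
  assume nn0: "n \<ge> n0" and hy: "0 < dist xbar y \<and> dist xbar y < rho x xbar n / (real n * (real n + 1))"
  define \<delta> where "\<delta> = dist xbar y"
  define D where "D = dist (x n) xbar"
  define r where "r = (real n + 1) / (real n + 2)"
  have n1: "n \<ge> 1" using nn0 n0 by simp
  have Dpos: "D > 0" using ne[OF n1] by (simp add: D_def)
  have rhon: "rho x xbar n = real n / (real n + 1) * D" by (simp add: rho_def D_def)
  have dpos: "\<delta> > 0" using hy by (simp add: \<delta>_def)
  have dlt: "\<delta> < D / (real n + 1)^2"
  proof -
    have "rho x xbar n / (real n * (real n + 1)) = D / (real n + 1)^2"
    proof -
      have nz: "real n \<noteq> 0" "real n + 1 \<noteq> 0" using n1 by auto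
      show ?thesis unfolding rhon using nz by (simp add: divide_simps power2_eq_square)
    qed
    then show ?thesis using hy by (simp add: \<delta>_def)
  qed
  define L1 where "L1 = rho x xbar n + min \<delta> D / 2"
  define L2 where "L2 = r * (D - \<delta>)"
  have L1gt: "L1 > rho x xbar n" using dpos Dpos by (simp add: L1_def)
  have L2gt: "L2 > rho x xbar n"
  proof -
    have np: "real n + 1 > 0" "real n + 2 > 0" by auto
    have "r * (D - \<delta>) > r * (D - D / (real n + 1)^2)"
    proof -
      have "r > 0" using np by (simp add: r_def)
      moreover have "D - D / (real n + 1)^2 < D - \<delta>" using dlt by simp
      ultimately show ?thesis by (rule mult_strict_left_mono[rotated])
    qed
    moreover have "r * (D - D / (real n + 1)^2) = real n / (real n + 1) * D"
    proof -
      have "D - D / (real n + 1)^2 = D * (real n * (real n + 2)) / (real n + 1)^2"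
      proof -
        have q: "(real n + 1)^2 \<noteq> 0" using np by simp
        have "D = D * (real n + 1)^2 / (real n + 1)^2" using q by simp
        also have "D * (real n + 1)^2 = D * (real n * (real n + 2)) + D"
          by (simp add: power2_eq_square algebra_simps)
        finally have "D = (D * (real n * (real n + 2)) + D) / (real n + 1)^2" .
        then show ?thesis by (simp add: add_divide_distrib)
      qed
      then show ?thesis using np by (simp add: r_def power2_eq_square)
    qed
    ultimately show ?thesis by (simp add: L2_def rhon)
  qed
  have bound: "min L1 L2 \<le> (\<Sum>i<N. theta x xbar n0 (a i) (a (Suc i)))"
    if N: "N \<ge> 1" and a0: "a 0 = x n" and aN: "a N = y" for N a
  proof (cases "\<exists>j<N. \<exists>m. n0 \<le> m \<and> m \<le> n \<and> {a j, a (Suc j)} = {x m, xbar}")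
    case True
    then obtain j m where j: "j < N" and m: "n0 \<le> m" "m \<le> n" "{a j, a (Suc j)} = {x m, xbar}"
      by blast
    have th: "theta x xbar n0 (a j) (a (Suc j)) = rho x xbar m"
      using theta_eq[OF distinct ne n0(1) m(1) m(3)] .
    have rm: "rho x xbar n \<le> rho x xbar m" using rho_mono[OF decr, of m n] m n0 by simp
    have split: "(\<Sum>i<N. theta x xbar n0 (a i) (a (Suc i))) =
        (\<Sum>i\<in>{0..<j}. theta x xbar n0 (a i) (a (Suc i))) + theta x xbar n0 (a j) (a (Suc j))
        + (\<Sum>i\<in>{Suc j..<N}. theta x xbar n0 (a i) (a (Suc i)))"
    proof -
      have "(\<Sum>i<N. theta x xbar n0 (a i) (a (Suc i))) = (\<Sum>i\<in>{0..<N}. theta x xbar n0 (a i) (a (Suc i)))"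
        by (simp add: atLeast0LessThan)
      also have "\<dots> = (\<Sum>i\<in>{0..<j}. theta x xbar n0 (a i) (a (Suc i))) + (\<Sum>i\<in>{j..<N}. theta x xbar n0 (a i) (a (Suc i)))"
        using j by (simp add: sum.atLeastLessThan_concat)
      also have "(\<Sum>i\<in>{j..<N}. theta x xbar n0 (a i) (a (Suc i))) = theta x xbar n0 (a j) (a (Suc j)) + (\<Sum>i\<in>{Suc j..<N}. theta x xbar n0 (a i) (a (Suc i)))"
        using j by (simp add: sum.atLeast_Suc_lessThan)
      finally show ?thesis by simp
    qed
    have s1: "dist (a 0) (a j) / 2 \<le> (\<Sum>i\<in>{0..<j}. theta x xbar n0 (a i) (a (Suc i)))"
      using chain_half[OF n0(1), of 0 j] by simp
    have s2: "dist (a (Suc j)) (a N) / 2 \<le> (\<Sum>i\<in>{Suc j..<N}. theta x xbar n0 (a i) (a (Suc i)))"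
      using chain_half[OF n0(1), of "Suc j" N] j by simp
    have "min \<delta> D / 2 \<le> dist (a 0) (a j) / 2 + dist (a (Suc j)) (a N) / 2"
    proof -
      have "a j = xbar \<or> a (Suc j) = xbar" using m(3) by (auto simp: doubleton_eq_iff)
      then show ?thesis
      proof
        assume "a j = xbar"
        then have "dist (a 0) (a j) = D" using a0 by (simp add: D_def)
        moreover have "0 \<le> dist (a (Suc j)) (a N)" by simp
        ultimately show ?thesis by linarith
      next
        assume "a (Suc j) = xbar"
        then have "dist (a (Suc j)) (a N) = \<delta>" using aN by (simp add: \<delta>_def)
        moreover have "0 \<le> dist (a 0) (a j)" by simp
        ultimately show ?thesis by linarith
      qed
    qed
    then have "L1 \<le> (\<Sum>i<N. theta x xbar n0 (a i) (a (Suc i)))"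
      using split s1 s2 th rm by (simp add: L1_def)
    then show ?thesis by simp
  next
    case False
    have edge: "r * (dist (a i) xbar - dist (a (Suc i)) xbar) \<le> theta x xbar n0 (a i) (a (Suc i))"
      if i: "i < N" for i
    proof -
      have r01: "0 \<le> r" "r \<le> 1" by (auto simp: r_def)
      have rd: "r * dist (a i) (a (Suc i)) \<le> theta x xbar n0 (a i) (a (Suc i))"
      proof -
        from theta_cases[of x xbar n0 "a i" "a (Suc i)"] show ?thesis
        proof
          assume "theta x xbar n0 (a i) (a (Suc i)) = dist (a i) (a (Suc i))"
          then show ?thesis using r01 by (simp add: mult_left_le_one_le)
        next
          assume "\<exists>m\<ge>n0. {a i, a (Suc i)} = {x m, xbar} \<and> theta x xbar n0 (a i) (a (Suc i)) = rho x xbar m"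
          then obtain m where m: "m \<ge> n0" "{a i, a (Suc i)} = {x m, xbar}"
            "theta x xbar n0 (a i) (a (Suc i)) = rho x xbar m" by auto
          have "m > n" using False i m by (meson not_le)
          have Dm: "dist (a i) (a (Suc i)) = dist (x m) xbar" using m(2)
            by (auto simp: doubleton_eq_iff dist_commute)
          have "r \<le> real m / (real m + 1)"
            using \<open>m > n\<close> by (simp add: r_def field_simps)
          then have "r * dist (x m) xbar \<le> real m / (real m + 1) * dist (x m) xbar"
            by (intro mult_right_mono) auto
          then show ?thesis using m(3) Dm by (simp add: rho_def)
        qed
      qed
      have "dist (a i) xbar - dist (a (Suc i)) xbar \<le> dist (a i) (a (Suc i))"
        by (metis dist_commute dist_triangle diff_le_eq add.commute)
      then have "r * (dist (a i) xbar - dist (a (Suc i)) xbar) \<le> r * dist (a i) (a (Suc i))"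
        using r01 by (intro mult_left_mono) auto
      then show ?thesis using rd by linarith
    qed
    have "(\<Sum>i<N. r * (dist (a i) xbar - dist (a (Suc i)) xbar)) \<le> (\<Sum>i<N. theta x xbar n0 (a i) (a (Suc i)))"
      by (rule sum_mono) (use edge in auto)
    moreover have "(\<Sum>i<N. r * (dist (a i) xbar - dist (a (Suc i)) xbar)) = r * (dist (a 0) xbar - dist (a N) xbar)"
      using sum_lessThan_telescope'[of "\<lambda>i. dist (a i) xbar" N]
      by (simp add: sum_distrib_left[symmetric])
    moreover have "r * (dist (a 0) xbar - dist (a N) xbar) = L2"
      using a0 aN by (simp add: L2_def D_def \<delta>_def dist_commute)
    ultimately show ?thesis by simp
  qed
  let ?S = "{(\<Sum>i<N. theta x xbar n0 (a i) (a (Suc i))) | N a. N \<ge> 1 \<and> a 0 = x n \<and> a N = y}"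
  have ne_S: "?S \<noteq> {}"
  proof -
    have "(\<Sum>i<1. theta x xbar n0 ((\<lambda>i. if i = 0 then x n else y) i) ((\<lambda>i. if i = 0 then x n else y) (Suc i))) \<in> ?S"
      by (rule CollectI, rule exI[of _ 1], rule exI[of _ "\<lambda>i. if i = 0 then x n else y"]) simp
    then show ?thesis by blast
  qed
  have "min L1 L2 \<le> Inf ?S"
    by (rule cInf_greatest[OF ne_S]) (use bound in blast)
  then show "dbar x xbar n0 (x n) y > rho x xbar n"
    using L1gt L2gt by (simp add: dbar_def)
qed

end
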